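(* Let $G$ be a finite connected graph with node set $V$. Define the binary relation $\preceq$ on $V$ by $u\preceq x$ if and only if $e(u)=d(u,x)+e(x)$. Then $\preceq$ is a partial order on $V$. Moreover, the set $U^{\preceq}$ of all maximal elements of this partial order is the unique tight upper certificate of $G$ of minimum size.
   Context: $d$ is the shortest-path distance in the (undirected, unweighted) graph $G$ and $e(u)=\max_{v\in V}d(u,v)$. For $U\subseteq V$, $e^U(v)=\min_{x\in U}(d(v,x)+e(x))$ ($+\infty$ if $U=\emptyset$). A tight upper certificate is a set $U\subseteq V$ such that $e^U(v)=e(v)$ for all $v\in V$. *)

theory Defs
  imports Main "HOL-Library.Extended_Nat"
begin

definition finite_graph :: "'a set \<Rightarrow> ('a \<Rightarrow> 'a \<Rightarrow> bool) \<Rightarrow> bool" where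
  "finite_graph V E \<longleftrightarrow> finite V \<and> (\<forall>u v. E u v \<longrightarrow> u \<in> V \<and> v \<in> V)
     \<and> (\<forall>u v. E u v \<longrightarrow> E v u) \<and> (\<forall>u. \<not> E u u)"

definition is_walk :: "('a \<Rightarrow> 'a \<Rightarrow> bool) \<Rightarrow> 'a \<Rightarrow> 'a \<Rightarrow> 'a list \<Rightarrow> bool" where
  "is_walk E u v xs \<longleftrightarrow> xs \<noteq> [] \<and> hd xs = u \<and> last xs = v
     \<and> (\<forall>i. Suc i < length xs \<longrightarrow> E (xs ! i) (xs ! Suc i))"

definition connected_graph :: "'a set \<Rightarrow> ('a \<Rightarrow> 'a \<Rightarrow> bool) \<Rightarrow> bool" where
  "connected_graph V E \<longleftrightarrow> finite_graph V E \<and> V \<noteq> {}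
     \<and> (\<forall>u\<in>V. \<forall>v\<in>V. \<exists>xs. is_walk E u v xs)"

definition dist :: "('a \<Rightarrow> 'a \<Rightarrow> bool) \<Rightarrow> 'a \<Rightarrow> 'a \<Rightarrow> nat" where
  "dist E u v = (LEAST n. \<exists>xs. is_walk E u v xs \<and> length xs = Suc n)"

definition ecc :: "'a set \<Rightarrow> ('a \<Rightarrow> 'a \<Rightarrow> bool) \<Rightarrow> 'a \<Rightarrow> nat" where
  "ecc V E u = Max ((\<lambda>v. dist E u v) ` V)"

text \<open>e^U(v) = min over x in U of d(v,x) + e(x); infinity if U is empty.\<close>
definition eccU :: "'a set \<Rightarrow> ('a \<Rightarrow> 'a \<Rightarrow> bool) \<Rightarrow> 'a set \<Rightarrow> 'a \<Rightarrow> enat" where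
  "eccU V E U v = (INF x\<in>U. enat (dist E v x + ecc V E x))"

definition tight_upper_certificate :: "'a set \<Rightarrow> ('a \<Rightarrow> 'a \<Rightarrow> bool) \<Rightarrow> 'a set \<Rightarrow> bool" where
  "tight_upper_certificate V E U \<longleftrightarrow> U \<subseteq> V \<and> (\<forall>v\<in>V. eccU V E U v = enat (ecc V E v))"

definition ecc_preceq :: "'a set \<Rightarrow> ('a \<Rightarrow> 'a \<Rightarrow> bool) \<Rightarrow> 'a \<Rightarrow> 'a \<Rightarrow> bool" where
  "ecc_preceq V E u x \<longleftrightarrow> ecc V E u = dist E u x + ecc V E x"

definition ecc_rel :: "'a set \<Rightarrow> ('a \<Rightarrow> 'a \<Rightarrow> bool) \<Rightarrow> 'a rel" where
  "ecc_rel V E = {(u, x). u \<in> V \<and> x \<in> V \<and> ecc_preceq V E u x}"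

definition maximal_elems :: "'a set \<Rightarrow> ('a \<Rightarrow> 'a \<Rightarrow> bool) \<Rightarrow> 'a set" where
  "maximal_elems V E = {x \<in> V. \<forall>y\<in>V. ecc_preceq V E x y \<longrightarrow> y = x}"

end

theory Submission
  imports Defs
begin

lemma walk_append:
  assumes "is_walk E u v xs" "is_walk E v w ys"
  shows "is_walk E u w (xs @ tl ys)"
proof -
  obtain y ys' where ys: "ys = y # ys'" using assms(2) unfolding is_walk_def by (cases ys) auto
  have yv: "y = v" using assms(2) ys unfolding is_walk_def by simp
  have xs: "xs \<noteq> []" "hd xs = u" "last xs = v"
    and ex: "\<And>i. Suc i < length xs \<Longrightarrow> E (xs ! i) (xs ! Suc i)"
    using assms(1) unfolding is_walk_def by auto
  have ey: "\<And>i. Suc i < length ys \<Longrightarrow> E (ys ! i) (ys ! Suc i)" and lw: "last ys = w"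
    using assms(2) unfolding is_walk_def by auto
  have "last (xs @ ys') = w"
  proof (cases "ys' = []")
    case True then show ?thesis using xs lw ys yv by simp
  next
    case False then show ?thesis using lw ys by simp
  qed
  moreover have "E ((xs @ ys') ! i) ((xs @ ys') ! Suc i)" if i: "Suc i < length (xs @ ys')" for i
  proof -
    consider "Suc i < length xs" | "Suc i = length xs" | "Suc i > length xs" by linarith
    then show ?thesis
    proof cases
      case 1 then show ?thesis using ex by (simp add: nth_append)
    next
      case 2
      have "xs ! i = v" using xs 2 by (metis diff_Suc_1 last_conv_nth)
      moreover have "ys ! 0 = v" using ys yv by simp
      moreover have "(xs @ ys') ! Suc i = ys ! 1" using 2 ys by (simp add: nth_append)
      moreover have "(xs @ ys') ! i = xs ! i" using 2 by (simp add: nth_append)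
      moreover have "Suc 0 < length ys" using i 2 ys by simp
      ultimately show ?thesis using ey[of 0] by simp
    next
      case 3
      define j where "j = i - length xs"
      have a: "(xs @ ys') ! i = ys ! Suc j" using 3 ys by (simp add: nth_append j_def)
      have b: "(xs @ ys') ! Suc i = ys ! Suc (Suc j)" using 3 ys
        by (simp add: nth_append j_def Suc_diff_le)
      have "Suc (Suc j) < length ys" using i 3 ys j_def by simp
      then show ?thesis using ey[of "Suc j"] a b by simp
    qed
  qed
  ultimately show ?thesis using xs ys unfolding is_walk_def by simp
qed

lemma dist_le: "is_walk E u v xs \<Longrightarrow> dist E u v \<le> length xs - 1"
proof -
  assume w: "is_walk E u v xs"
  then have "xs \<noteq> []" unfolding is_walk_def by simp
  then have l: "length xs = Suc (length xs - 1)" by simp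
  have "\<exists>ys. is_walk E u v ys \<and> length ys = Suc (length xs - 1)" using w l by blast
  then show ?thesis unfolding dist_def by (rule Least_le)
qed

lemma dist_walk: "\<exists>xs. is_walk E u v xs \<Longrightarrow> \<exists>xs. is_walk E u v xs \<and> length xs = Suc (dist E u v)"
proof -
  assume "\<exists>xs. is_walk E u v xs"
  then obtain xs where w: "is_walk E u v xs" by blast
  then have "xs \<noteq> []" unfolding is_walk_def by simp
  then have l: "length xs = Suc (length xs - 1)" by simp
  have "\<exists>n xs. is_walk E u v xs \<and> length xs = Suc n" using w l by blast
  then show ?thesis unfolding dist_def by (rule LeastI_ex)
qed

lemma dist_self: "dist E u u = 0"
proof -
  have "is_walk E u u [u]" unfolding is_walk_def by simp
  from dist_le[OF this] show ?thesis by simp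
qed

lemma dist_zero: "\<exists>xs. is_walk E u v xs \<Longrightarrow> dist E u v = 0 \<Longrightarrow> u = v"
proof -
  assume a: "\<exists>xs. is_walk E u v xs" "dist E u v = 0"
  obtain xs where "is_walk E u v xs" "length xs = Suc (dist E u v)" using dist_walk[OF a(1)] by blast
  then have "is_walk E u v xs" "length xs = 1" using a(2) by auto
  then show ?thesis unfolding is_walk_def by (cases xs) auto
qed

lemma dist_tri:
  assumes "\<exists>xs. is_walk E u v xs" "\<exists>xs. is_walk E v w xs"
  shows "dist E u w \<le> dist E u v + dist E v w"
proof -
  obtain xs where xs: "is_walk E u v xs" "length xs = Suc (dist E u v)" using dist_walk[OF assms(1)] by blast
  obtain ys where ys: "is_walk E v w ys" "length ys = Suc (dist E v w)" using dist_walk[OF assms(2)] by blast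
  have w: "is_walk E u w (xs @ tl ys)" using walk_append[OF xs(1) ys(1)] .
  have "length (xs @ tl ys) - 1 = dist E u v + dist E v w" using xs(2) ys(2) by simp
  with dist_le[OF w] show ?thesis by simp
qed

locale cg =
  fixes V :: "'a set" and E :: "'a \<Rightarrow> 'a \<Rightarrow> bool"
  assumes cg: "connected_graph V E"
begin

lemma fin: "finite V" and ne: "V \<noteq> {}" and conn: "\<And>u v. u \<in> V \<Longrightarrow> v \<in> V \<Longrightarrow> \<exists>xs. is_walk E u v xs"
  using cg unfolding connected_graph_def finite_graph_def by auto

lemma tri: "u \<in> V \<Longrightarrow> v \<in> V \<Longrightarrow> w \<in> V \<Longrightarrow> dist E u w \<le> dist E u v + dist E v w"
  by (rule dist_tri) (simp_all add: conn)

lemma zero: "u \<in> V \<Longrightarrow> v \<in> V \<Longrightarrow> dist E u v = 0 \<Longrightarrow> u = v"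
  by (rule dist_zero) (simp_all add: conn)

lemma ecc_ge: "v \<in> V \<Longrightarrow> dist E u v \<le> ecc V E u"
  unfolding ecc_def using fin by simp

lemma ecc_att: "\<exists>v\<in>V. dist E u v = ecc V E u"
proof -
  have "ecc V E u \<in> (\<lambda>v. dist E u v) ` V" unfolding ecc_def using fin ne by (intro Max_in) auto
  then show ?thesis by auto
qed

lemma ecc_tri: "u \<in> V \<Longrightarrow> x \<in> V \<Longrightarrow> ecc V E u \<le> dist E u x + ecc V E x"
proof -
  assume u: "u \<in> V" and x: "x \<in> V"
  obtain v where v: "v \<in> V" "dist E u v = ecc V E u" using ecc_att by blast
  have "dist E u v \<le> dist E u x + dist E x v" using tri u x v by blast
  also have "\<dots> \<le> dist E u x + ecc V E x" using ecc_ge v by simp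
  finally show ?thesis using v by simp
qed

lemma pre_trans: "u \<in> V \<Longrightarrow> x \<in> V \<Longrightarrow> y \<in> V \<Longrightarrow> ecc_preceq V E u x \<Longrightarrow> ecc_preceq V E x y
   \<Longrightarrow> ecc_preceq V E u y"
  unfolding ecc_preceq_def using tri[of u x y] ecc_tri[of u y] by linarith

lemma pre_anti: "u \<in> V \<Longrightarrow> x \<in> V \<Longrightarrow> ecc_preceq V E u x \<Longrightarrow> ecc_preceq V E x u \<Longrightarrow> u = x"
  unfolding ecc_preceq_def using zero[of u x] by simp

lemma po: "partial_order_on V (ecc_rel V E)"
  unfolding partial_order_on_def preorder_on_def
proof (intro conjI)
  show "ecc_rel V E \<subseteq> V \<times> V" unfolding ecc_rel_def by blast
  show "refl_on V (ecc_rel V E)"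
  proof (rule refl_onI)
    fix x assume "x \<in> V"
    then show "(x, x) \<in> ecc_rel V E" unfolding ecc_rel_def ecc_preceq_def by (simp add: dist_self)
  qed
  show "trans (ecc_rel V E)"
  proof (rule transI)
    fix x y z assume "(x, y) \<in> ecc_rel V E" "(y, z) \<in> ecc_rel V E"
    then have "x \<in> V" "y \<in> V" "z \<in> V" "ecc_preceq V E x y" "ecc_preceq V E y z"
      unfolding ecc_rel_def by simp_all
    then show "(x, z) \<in> ecc_rel V E" unfolding ecc_rel_def using pre_trans[of x y z] by simp
  qed
  show "antisym (ecc_rel V E)"
  proof (rule antisymI)
    fix x y assume "(x, y) \<in> ecc_rel V E" "(y, x) \<in> ecc_rel V E"
    then have "x \<in> V" "y \<in> V" "ecc_preceq V E x y" "ecc_preceq V E y x"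
      unfolding ecc_rel_def by simp_all
    then show "x = y" using pre_anti[of x y] by simp
  qed
qed

lemma max_above: "v \<in> V \<Longrightarrow> \<exists>m\<in>maximal_elems V E. ecc_preceq V E v m"
proof -
  assume v: "v \<in> V"
  let ?P = "\<lambda>x. x \<in> V \<and> ecc_preceq V E v x"
  have "?P v" using v by (simp add: ecc_preceq_def dist_self)
  then obtain m where m: "?P m" and mm: "\<And>y. ?P y \<Longrightarrow> ecc V E m \<le> ecc V E y"
    using ex_has_least_nat[of ?P v "ecc V E"] by blast
  have "m \<in> maximal_elems V E"
    unfolding maximal_elems_def
  proof (intro CollectI conjI ballI impI)
    show "m \<in> V" using m by simp
    fix y assume y: "y \<in> V" "ecc_preceq V E m y"
    then have "?P y" using pre_trans v m by blast
    then have "ecc V E m \<le> ecc V E y" using mm by blast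
    then have "dist E m y = 0" using y(2) unfolding ecc_preceq_def by simp
    then show "y = m" using zero y m by metis
  qed
  then show ?thesis using m by blast
qed

lemma eccU_ge: "U \<subseteq> V \<Longrightarrow> enat (ecc V E v) \<le> eccU V E U v" if "v \<in> V"
  unfolding eccU_def using ecc_tri[OF that] by (auto intro!: INF_greatest)

lemma tight: "tight_upper_certificate V E (maximal_elems V E)"
  unfolding tight_upper_certificate_def
proof (intro conjI ballI)
  show "maximal_elems V E \<subseteq> V" unfolding maximal_elems_def by auto
  fix v assume v: "v \<in> V"
  obtain m where m: "m \<in> maximal_elems V E" "ecc_preceq V E v m" using max_above v by blast
  have "eccU V E (maximal_elems V E) v \<le> enat (dist E v m + ecc V E m)"
    unfolding eccU_def using m(1) by (rule INF_lower)
  also have "\<dots> = enat (ecc V E v)" using m(2) unfolding ecc_preceq_def by simp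
  finally show "eccU V E (maximal_elems V E) v = enat (ecc V E v)"
    using eccU_ge[OF v \<open>maximal_elems V E \<subseteq> V\<close>] by simp
qed

lemma contains: "tight_upper_certificate V E U \<Longrightarrow> maximal_elems V E \<subseteq> U"
proof
  fix M assume t: "tight_upper_certificate V E U" and M: "M \<in> maximal_elems V E"
  have MV: "M \<in> V" using M unfolding maximal_elems_def by auto
  have UV: "U \<subseteq> V" using t unfolding tight_upper_certificate_def by auto
  show "M \<in> U"
  proof (rule ccontr)
    assume nM: "M \<notin> U"
    have "enat (Suc (ecc V E M)) \<le> eccU V E U M"
      unfolding eccU_def
    proof (rule INF_greatest)
      fix x assume x: "x \<in> U"
      then have xV: "x \<in> V" using UV by auto
      have "x \<noteq> M" using x nM by auto
      then have "\<not> ecc_preceq V E M x" using M xV unfolding maximal_elems_def by auto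
      then have "ecc V E M < dist E M x + ecc V E x" using ecc_tri[OF MV xV]
        unfolding ecc_preceq_def by simp
      then show "enat (Suc (ecc V E M)) \<le> enat (dist E M x + ecc V E x)" by simp
    qed
    moreover have "eccU V E U M = enat (ecc V E M)" using t MV unfolding tight_upper_certificate_def by auto
    ultimately show False by simp
  qed
qed

end

theorem proposition2:
  fixes V :: "'a set" and E :: "'a \<Rightarrow> 'a \<Rightarrow> bool"
  assumes "connected_graph V E"
  shows "partial_order_on V (ecc_rel V E)
    \<and> tight_upper_certificate V E (maximal_elems V E)
    \<and> (\<forall>U. tight_upper_certificate V E U \<longrightarrow> card (maximal_elems V E) \<le> card U)
    \<and> (\<forall>U. tight_upper_certificate V E U \<and> card U = card (maximal_elems V E)
          \<longrightarrow> U = maximal_elems V E)"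
proof -
  interpret cg V E by (rule cg.intro[OF assms])
  have finU: "finite U" if t: "tight_upper_certificate V E U" for U
  proof -
    have "U \<subseteq> V" using t unfolding tight_upper_certificate_def by simp
    then show ?thesis using fin by (rule finite_subset)
  qed
  have c1: "\<forall>U. tight_upper_certificate V E U \<longrightarrow> card (maximal_elems V E) \<le> card U"
  proof (intro allI impI)
    fix U assume "tight_upper_certificate V E U"
    then show "card (maximal_elems V E) \<le> card U" using card_mono[OF finU contains] by simp
  qed
  have c2: "\<forall>U. tight_upper_certificate V E U \<and> card U = card (maximal_elems V E)
          \<longrightarrow> U = maximal_elems V E"
  proof (intro allI impI)
    fix U assume a: "tight_upper_certificate V E U \<and> card U = card (maximal_elems V E)"
    then have "maximal_elems V E \<subseteq> U" "finite U" using contains[of U] finU[of U] by simp_all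
    then show "U = maximal_elems V E" using card_subset_eq[of U "maximal_elems V E"] a by simp
  qed
  from po tight c1 c2 show ?thesis by (intro conjI)
qed

end
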